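(* Every congruence-splitting lattice has permutable congruences.
   Context: For a lattice $L$ and $x,y\in L$, $\Theta(x,y)$ denotes the least congruence of $L$ identifying $x$ and $y$; $\operatorname{Con}L$ is the lattice of congruences of $L$. A lattice $L$ is congruence-splitting if for all $u\leq v$ in $L$ and all $\alpha,\beta\in\operatorname{Con}L$ with $\Theta(u,v)=\alpha\vee\beta$, there exist $x,y$ in the interval $[u,v]$ with $x\vee y=v$, $u\equiv_\alpha x$ and $u\equiv_\beta y$. A lattice has permutable congruences if $\alpha\beta=\beta\alpha$ for all congruences $\alpha,\beta$, where $\alpha\beta=\{(x,y): \exists z,\ (x,z)\in\alpha,\ (z,y)\in\beta\}$. *)

theory Defs
  imports Main
begin

definition lat_congruence :: "('a::lattice) rel \<Rightarrow> bool" where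
  "lat_congruence \<theta> \<longleftrightarrow> equiv UNIV \<theta> \<and>
     (\<forall>a b c d. (a, b) \<in> \<theta> \<and> (c, d) \<in> \<theta> \<longrightarrow>
        (sup a c, sup b d) \<in> \<theta> \<and> (inf a c, inf b d) \<in> \<theta>)"

definition Con :: "('a::lattice) rel set" where
  "Con = {\<theta>. lat_congruence \<theta>}"

definition Theta :: "'a::lattice \<Rightarrow> 'a \<Rightarrow> 'a rel" where
  "Theta x y = \<Inter>{\<theta>. lat_congruence \<theta> \<and> (x, y) \<in> \<theta>}"

definition con_join :: "('a::lattice) rel \<Rightarrow> 'a rel \<Rightarrow> 'a rel" where
  "con_join \<alpha> \<beta> = \<Inter>{\<theta>. lat_congruence \<theta> \<and> \<alpha> \<union> \<beta> \<subseteq> \<theta>}"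

definition congruence_splitting :: "'a::lattice itself \<Rightarrow> bool" where
  "congruence_splitting TYPE('a) \<longleftrightarrow>
     (\<forall>(u::'a) v \<alpha> \<beta>. u \<le> v \<longrightarrow> \<alpha> \<in> Con \<longrightarrow> \<beta> \<in> Con \<longrightarrow>
        Theta u v = con_join \<alpha> \<beta> \<longrightarrow>
        (\<exists>x y. u \<le> x \<and> x \<le> v \<and> u \<le> y \<and> y \<le> v \<and> sup x y = v \<and>
               (u, x) \<in> \<alpha> \<and> (u, y) \<in> \<beta>))"

definition permutable_congruences :: "'a::lattice itself \<Rightarrow> bool" where
  "permutable_congruences TYPE('a) \<longleftrightarrow>
     (\<forall>\<alpha> \<beta> :: 'a rel. \<alpha> \<in> Con \<longrightarrow> \<beta> \<in> Con \<longrightarrow> \<alpha> O \<beta> = \<beta> O \<alpha>)"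

end

theory Submission
  imports Defs
begin

lemma cg_refl: "lat_congruence t \<Longrightarrow> (x, x) \<in> t"
  unfolding lat_congruence_def equiv_def refl_on_def by blast

lemma cg_sym: "lat_congruence t \<Longrightarrow> (x, y) \<in> t \<Longrightarrow> (y, x) \<in> t"
  unfolding lat_congruence_def equiv_def sym_def by blast

lemma cg_trans: "lat_congruence t \<Longrightarrow> (x, y) \<in> t \<Longrightarrow> (y, z) \<in> t \<Longrightarrow> (x, z) \<in> t"
  unfolding lat_congruence_def equiv_def trans_def by blast

lemma cg_sup: "lat_congruence t \<Longrightarrow> (a, b) \<in> t \<Longrightarrow> (c, d) \<in> t \<Longrightarrow> (sup a c, sup b d) \<in> t"
  unfolding lat_congruence_def by blast

lemma cg_inf: "lat_congruence t \<Longrightarrow> (a, b) \<in> t \<Longrightarrow> (c, d) \<in> t \<Longrightarrow> (inf a c, inf b d) \<in> t"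
  unfolding lat_congruence_def by blast

lemma cg_Inter:
  assumes "\<And>t. t \<in> S \<Longrightarrow> lat_congruence (t::('a::lattice) rel)"
  shows "lat_congruence (\<Inter>S)"
proof -
  have "equiv UNIV (\<Inter>S)"
    unfolding equiv_def refl_on_def sym_def trans_def
  proof (intro conjI allI impI ballI)
    show "\<Inter>S \<subseteq> UNIV \<times> UNIV" by simp
    fix x assume "x \<in> (UNIV::'a set)" thus "(x, x) \<in> \<Inter>S" using assms cg_refl by blast
  next
    fix x y assume "(x, y) \<in> \<Inter>S" thus "(y, x) \<in> \<Inter>S" using assms cg_sym by blast
  next
    fix x y z assume "(x, y) \<in> \<Inter>S" "(y, z) \<in> \<Inter>S"
    thus "(x, z) \<in> \<Inter>S" using assms cg_trans by blast
  qed
  moreover have "\<forall>a b c d. (a, b) \<in> \<Inter>S \<and> (c, d) \<in> \<Inter>S \<longrightarrow>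
        (sup a c, sup b d) \<in> \<Inter>S \<and> (inf a c, inf b d) \<in> \<Inter>S"
    using assms cg_sup cg_inf by blast
  ultimately show ?thesis unfolding lat_congruence_def by blast
qed

lemma cg_int: "lat_congruence a \<Longrightarrow> lat_congruence b \<Longrightarrow> lat_congruence (a \<inter> b)"
  using cg_Inter[of "{a, b}"] by auto

lemma Theta_cg: "lat_congruence (Theta (u::'a::lattice) v)"
  unfolding Theta_def by (rule cg_Inter) blast

lemma Theta_in: "((u::'a::lattice), v) \<in> Theta u v"
  unfolding Theta_def by blast

lemma Theta_least: "lat_congruence t \<Longrightarrow> ((u::'a::lattice), v) \<in> t \<Longrightarrow> Theta u v \<subseteq> t"
  unfolding Theta_def by blast

lemma join_cg: "lat_congruence (con_join (a::('a::lattice) rel) b)"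
  unfolding con_join_def by (rule cg_Inter) blast

lemma join_ub: "a \<union> b \<subseteq> con_join (a::('a::lattice) rel) b"
  unfolding con_join_def by blast

lemma join_least: "lat_congruence t \<Longrightarrow> a \<union> b \<subseteq> t \<Longrightarrow> con_join (a::('a::lattice) rel) b \<subseteq> t"
  unfolding con_join_def by blast

lemma keyK:
  fixes u z v :: "'a::lattice"
  assumes cs: "congruence_splitting TYPE('a)"
    and A: "lat_congruence \<alpha>" and B: "lat_congruence \<beta>"
    and uz: "u \<le> z" and zv: "z \<le> v"
    and h1: "(u, z) \<in> \<alpha> \<union> \<beta>" and h2: "(z, v) \<in> \<alpha> \<union> \<beta>"
  shows "\<exists>x y. u \<le> x \<and> u \<le> y \<and> sup x y = v \<and> (u, x) \<in> \<alpha> \<and> (u, y) \<in> \<beta>"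
proof -
  define T where "T = Theta u v"
  have T: "lat_congruence T" unfolding T_def by (rule Theta_cg)
  have uvT: "(u, v) \<in> T" unfolding T_def by (rule Theta_in)
  have "(inf z v, inf z u) \<in> T" by (rule cg_inf[OF T]) (auto intro: cg_refl[OF T] cg_sym[OF T] uvT)
  hence uzT: "(z, u) \<in> T" using uz zv by (simp add: inf_absorb1 inf_absorb2)
  have "(sup z u, sup z v) \<in> T" by (rule cg_sup[OF T]) (auto intro: cg_refl[OF T] uvT)
  hence zvT: "(z, v) \<in> T" using uz zv by (simp add: sup_absorb1 sup_absorb2)
  define a' where "a' = \<alpha> \<inter> T"
  define b' where "b' = \<beta> \<inter> T"
  have A': "lat_congruence a'" unfolding a'_def by (rule cg_int[OF A T])
  have B': "lat_congruence b'" unfolding b'_def by (rule cg_int[OF B T])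
  define J where "J = con_join a' b'"
  have J: "lat_congruence J" unfolding J_def by (rule join_cg)
  have "(u, z) \<in> J" using join_ub[of a' b'] h1 cg_sym[OF T uzT] unfolding J_def a'_def b'_def by blast
  moreover have "(z, v) \<in> J" using join_ub[of a' b'] h2 zvT unfolding J_def a'_def b'_def by blast
  ultimately have "(u, v) \<in> J" using cg_trans[OF J] by blast
  hence "T \<subseteq> J" unfolding T_def by (rule Theta_least[OF J])
  moreover have "J \<subseteq> T" unfolding J_def by (rule join_least[OF T]) (auto simp: a'_def b'_def)
  ultimately have "Theta u v = con_join a' b'" unfolding T_def J_def by blast
  moreover have "u \<le> v" using uz zv by simp
  ultimately obtain x y where "u \<le> x" "u \<le> y" "sup x y = v" "(u, x) \<in> a'" "(u, y) \<in> b'"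
    using cs A' B' unfolding congruence_splitting_def Con_def by blast
  thus ?thesis unfolding a'_def b'_def by blast
qed

lemma perm_sub:
  fixes \<alpha> \<beta> :: "('a::lattice) rel"
  assumes cs: "congruence_splitting TYPE('a)"
    and A: "lat_congruence \<alpha>" and B: "lat_congruence \<beta>"
  shows "\<alpha> O \<beta> \<subseteq> \<beta> O \<alpha>"
proof
  fix p assume "p \<in> \<alpha> O \<beta>"
  then obtain a b c where p: "p = (a, c)" and ab: "(a, b) \<in> \<alpha>" and bc: "(b, c) \<in> \<beta>" by blast
  define m where "m = inf a c"
  define z1 where "z1 = sup (inf a b) m"
  have "(sup (inf a b) m, sup m m) \<in> \<beta>"
    by (rule cg_sup[OF B]) (auto simp: m_def intro: cg_inf[OF B] cg_refl[OF B] bc)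
  hence h1: "(m, z1) \<in> \<alpha> \<union> \<beta>" unfolding z1_def using cg_sym[OF B] by auto
  have "(inf a b, inf a a) \<in> \<alpha>"
    by (rule cg_inf[OF A]) (auto intro: cg_refl[OF A] cg_sym[OF A] ab)
  hence "(sup (inf a b) m, sup (inf a a) m) \<in> \<alpha>"
    by (rule cg_sup[OF A]) (auto intro: cg_refl[OF A])
  hence h2: "(z1, a) \<in> \<alpha> \<union> \<beta>" unfolding z1_def by (simp add: m_def)
  have le1: "m \<le> z1" "z1 \<le> a" unfolding z1_def m_def by (auto intro: le_infI1)
  obtain x1 y1 where x1: "m \<le> x1" "m \<le> y1" "sup x1 y1 = a" "(m, x1) \<in> \<alpha>" "(m, y1) \<in> \<beta>"
    using keyK[OF cs A B le1 h1 h2] by blast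
  define z2 where "z2 = sup (inf b c) m"
  have "(sup (inf a c) m, sup (inf b c) m) \<in> \<alpha>"
    by (rule cg_sup[OF A]) (auto intro: cg_inf[OF A] cg_refl[OF A] ab)
  hence g1: "(m, z2) \<in> \<alpha> \<union> \<beta>" unfolding z2_def m_def by simp
  have "(inf b c, inf c c) \<in> \<beta>"
    by (rule cg_inf[OF B]) (auto intro: cg_refl[OF B] bc)
  hence "(sup (inf b c) m, sup (inf c c) m) \<in> \<beta>"
    by (rule cg_sup[OF B]) (auto intro: cg_refl[OF B])
  moreover have "sup c m = c" unfolding m_def by (simp add: sup_absorb1)
  ultimately have g2: "(z2, c) \<in> \<alpha> \<union> \<beta>" unfolding z2_def by simp
  have le2: "m \<le> z2" "z2 \<le> c" unfolding z2_def m_def by (auto intro: le_infI2)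
  obtain x2 y2 where x2: "m \<le> x2" "m \<le> y2" "sup x2 y2 = c" "(m, x2) \<in> \<alpha>" "(m, y2) \<in> \<beta>"
    using keyK[OF cs A B le2 g1 g2] by blast
  define e where "e = sup x1 y2"
  have "(sup x1 y1, sup x1 m) \<in> \<beta>"
    by (rule cg_sup[OF B]) (auto intro: cg_refl[OF B] cg_sym[OF B] x1)
  hence ax1: "(a, x1) \<in> \<beta>" using x1 by (simp add: sup_absorb1)
  have "(sup x1 y2, sup x1 m) \<in> \<beta>"
    by (rule cg_sup[OF B]) (auto intro: cg_refl[OF B] cg_sym[OF B] x2)
  hence "(e, x1) \<in> \<beta>" unfolding e_def using x1 by (simp add: sup_absorb1)
  hence ae: "(a, e) \<in> \<beta>" using ax1 cg_trans[OF B] cg_sym[OF B] by blast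
  have "(sup x1 y2, sup m y2) \<in> \<alpha>"
    by (rule cg_sup[OF A]) (auto intro: cg_refl[OF A] cg_sym[OF A] x1)
  hence ey: "(e, y2) \<in> \<alpha>" unfolding e_def using x2 by (simp add: sup_absorb2)
  have "(sup x2 y2, sup m y2) \<in> \<alpha>"
    by (rule cg_sup[OF A]) (auto intro: cg_refl[OF A] cg_sym[OF A] x2)
  hence "(c, y2) \<in> \<alpha>" using x2 by (simp add: sup_absorb2)
  hence "(e, c) \<in> \<alpha>" using ey cg_trans[OF A] cg_sym[OF A] by blast
  thus "p \<in> \<beta> O \<alpha>" using ae p by blast
qed

theorem theorem1p2:
  assumes "congruence_splitting TYPE('a::lattice)"
  shows "permutable_congruences TYPE('a)"
  unfolding permutable_congruences_def Con_def
  using perm_sub[OF assms] by blast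

end
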